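(* Let $\alpha\ge0$ and $k\ge1$, and let $\mathbf{v}$ be a unit vector with exactly $k$ nonzero entries whose sorted absolute values satisfy $v_{(i)}^2=\lambda i^{-\alpha}$ for $i=1,\dots,k$, where $\lambda=\big(\sum_{i=1}^k i^{-\alpha}\big)^{-1}$. Then, with constants depending only on $\alpha$ (not on $k$), $$ \max_{1\le p\le k} p\,s^2(p)\ \asymp\ \begin{cases} k^{2-2\alpha}, & 0\le\alpha<\tfrac12,\\ k, & \alpha\ge\tfrac12.\end{cases} $$
   Context: For a unit vector $\mathbf{v}$ with at most $k$ nonzero entries, $v_{(1)}\ge v_{(2)}\ge\cdots$ are the absolute values of its entries in decreasing order and $s(p)=\big(\sum_{i=1}^p v_{(i)}^2\big)^{-1}$ for $1\le p\le k$. For positive quantities $a_k,b_k$, $a_k\asymp b_k$ means there are constants $0<c\le C$ with $c\,b_k\le a_k\le C\,b_k$ for all (sufficiently large) $k$. *)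

theory Defs
  imports Complex_Main
begin

text \<open>A vector in R^n is represented as v :: nat \<Rightarrow> real with coordinates v 0, ..., v (n-1).\<close>

definition sorted_abs :: "nat \<Rightarrow> (nat \<Rightarrow> real) \<Rightarrow> nat \<Rightarrow> real" where
  "sorted_abs n v i = rev (sort (map (\<lambda>j. \<bar>v j\<bar>) [0..<n])) ! (i - 1)"
  \<comment> \<open>v_(i), 1-indexed: the i-th largest absolute value among the n entries\<close>

definition s_fun :: "nat \<Rightarrow> (nat \<Rightarrow> real) \<Rightarrow> nat \<Rightarrow> real" where
  "s_fun n v p = inverse (\<Sum>i=1..p. (sorted_abs n v i)^2)"

definition lam :: "real \<Rightarrow> nat \<Rightarrow> real" where
  "lam \<alpha> k = inverse (\<Sum>i=1..k. real i powr (-\<alpha>))"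

definition rate :: "real \<Rightarrow> nat \<Rightarrow> real" where
  "rate \<alpha> k = (if \<alpha> < 1/2 then real k powr (2 - 2*\<alpha>) else real k)"

end

theory Submission imports Defs begin

definition S :: "real \<Rightarrow> nat \<Rightarrow> real" where "S a m = (\<Sum>i=1..m. real i powr (-a))"

lemma sqrt_sum: "(\<Sum>i=1..m. 1 / sqrt (real i)) \<le> 2 * sqrt (real m)"
proof (induction m)
  case 0 then show ?case by simp
next
  case (Suc m)
  have e: "(sqrt (real m + 1) - sqrt m) * (sqrt (real m + 1) + sqrt m) = 1"
    by (simp add: algebra_simps)
  have l: "sqrt (real m) \<le> sqrt (real m + 1)" by simp
  have p: "sqrt (real m + 1) > 0" by simp
  have "1 / sqrt (real m + 1) \<le> 2 * (sqrt (real m + 1) - sqrt m)"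
  proof -
    have "1 = (sqrt (real m + 1) - sqrt m) * (sqrt (real m + 1) + sqrt m)" using e by simp
    also have "\<dots> \<le> (sqrt (real m + 1) - sqrt m) * (2 * sqrt (real m + 1))"
      using l by (intro mult_left_mono) auto
    finally show ?thesis using p by (simp add: field_simps)
  qed
  then show ?case using Suc by (simp add: add.commute)
qed

lemma S_lower: assumes "a \<ge> 0" "m \<ge> 1" shows "real m powr (1 - a) \<le> S a m"
proof -
  have "(\<Sum>i=1..m. real m powr (-a)) \<le> S a m"
    unfolding S_def using assms by (intro sum_mono) (auto intro!: powr_mono2')
  moreover have "(\<Sum>i=1..m. real m powr (-a)) = real m powr (1 - a)"
    using assms by (simp add: powr_diff powr_minus field_simps)
  ultimately show ?thesis by simp
qed

lemma term_bound: assumes "i \<ge> 1" "m > 0"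
  and "(a \<le> 1/2 \<and> real i \<le> m) \<or> (a \<ge> 1/2 \<and> m \<le> real i)"
  shows "real i powr (-a) \<le> 1 / sqrt (real i) * m powr (1/2 - a)"
proof -
  have "real i powr (1/2 + (-a)) = sqrt (real i) * real i powr (-a)"
    using assms by (simp only: powr_add powr_half_sqrt of_nat_0_le_iff)
  then have "real i powr (-a) = real i powr (1/2 - a) / sqrt (real i)"
    using assms by (simp add: field_simps)
  moreover have "real i powr (1/2 - a) \<le> m powr (1/2 - a)"
    using assms(3)
  proof
    assume "a \<le> 1/2 \<and> real i \<le> m" then show ?thesis using assms by (intro powr_mono2) auto
  next
    assume "a \<ge> 1/2 \<and> m \<le> real i" then show ?thesis using assms by (intro powr_mono2') auto
  qed
  ultimately show ?thesis using assms by (simp add: divide_right_mono)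
qed

lemma upper_small: assumes "0 \<le> a" "a < 1/2" "1 \<le> p" "p \<le> k"
  shows "real p * (S a k)^2 \<le> 4 * real k powr (2 - 2*a) * (S a p)^2"
proof -
  have "S a k \<le> (\<Sum>i=1..k. 1 / sqrt (real i) * real k powr (1/2 - a))"
    unfolding S_def using assms by (intro sum_mono term_bound) auto
  also have "\<dots> = (\<Sum>i=1..k. 1 / sqrt (real i)) * real k powr (1/2 - a)"
    by (simp add: sum_distrib_right)
  also have "\<dots> \<le> 2 * sqrt (real k) * real k powr (1/2 - a)"
    by (intro mult_right_mono sqrt_sum) auto
  also have "\<dots> = 2 * real k powr (1 - a)"
    using assms by (simp add: powr_half_sqrt[symmetric] powr_add[symmetric])
  finally have Sk: "S a k \<le> 2 * real k powr (1 - a)" .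
  have Sk0: "0 \<le> S a k" unfolding S_def by (intro sum_nonneg) auto
  have Sp: "real p powr (1 - a) \<le> S a p" using S_lower assms by auto
  have "real p = real p powr 1" using assms by simp
  also have "\<dots> \<le> real p powr (2 - 2*a)" using assms by (intro powr_mono) auto
  also have "\<dots> = (real p powr (1 - a))^2" using assms
    by (simp add: powr_add[symmetric] power2_eq_square)
  also have "\<dots> \<le> (S a p)^2" using Sp assms by (intro power_mono) auto
  finally have pS: "real p \<le> (S a p)^2" .
  have "(S a k)^2 \<le> (2 * real k powr (1 - a))^2" using Sk Sk0 by (intro power_mono) auto
  also have "\<dots> = 4 * real k powr (2 - 2*a)"
    using assms by (simp add: power2_eq_square powr_add[symmetric])
  finally have "(S a k)^2 \<le> 4 * real k powr (2 - 2*a)" .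
  then have "real p * (S a k)^2 \<le> (S a p)^2 * (4 * real k powr (2 - 2*a))"
    using pS by (intro mult_mono) auto
  then show ?thesis by (simp add: mult.commute mult.left_commute)
qed

lemma upper_large: assumes "1/2 \<le> a" "1 \<le> p" "p \<le> k"
  shows "real p * (S a k)^2 \<le> 9 * real k * (S a p)^2"
proof -
  have U: "{1..k} = {1..p} \<union> {Suc p..k}" using assms by auto
  have split: "S a k = S a p + (\<Sum>i=Suc p..k. real i powr (-a))"
    unfolding S_def U by (rule sum.union_disjoint) auto
  have "(\<Sum>i=Suc p..k. real i powr (-a)) \<le> (\<Sum>i=Suc p..k. 1 / sqrt (real i) * real p powr (1/2 - a))"
    using assms by (intro sum_mono term_bound) auto
  also have "\<dots> = (\<Sum>i=Suc p..k. 1 / sqrt (real i)) * real p powr (1/2 - a)"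
    by (simp add: sum_distrib_right)
  also have "\<dots> \<le> (\<Sum>i=1..k. 1 / sqrt (real i)) * real p powr (1/2 - a)"
    by (intro mult_right_mono sum_mono2) auto
  also have "\<dots> \<le> 2 * sqrt (real k) * real p powr (1/2 - a)"
    by (intro mult_right_mono sqrt_sum) auto
  finally have T: "(\<Sum>i=Suc p..k. real i powr (-a)) \<le> 2 * sqrt (real k) * real p powr (1/2 - a)" .
  have pp: "sqrt (real p) * real p powr (1/2 - a) = real p powr (1 - a)"
    using assms by (simp add: powr_half_sqrt[symmetric] powr_add[symmetric])
  have Sp: "real p powr (1 - a) \<le> S a p" using S_lower assms by auto
  have Sp0: "0 \<le> S a p" unfolding S_def by (intro sum_nonneg) auto
  have Sk0: "0 \<le> S a k" unfolding S_def by (intro sum_nonneg) auto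
  have sq: "sqrt (real p) \<le> sqrt (real k)" using assms by simp
  have "sqrt (real p) * S a k \<le> sqrt (real p) * S a p + sqrt (real p) * (2 * sqrt (real k) * real p powr (1/2 - a))"
    using split T by (simp add: distrib_left mult_left_mono)
  also have "\<dots> = sqrt (real p) * S a p + 2 * sqrt (real k) * real p powr (1 - a)"
    using pp by (simp add: algebra_simps)
  also have "\<dots> \<le> sqrt (real k) * S a p + 2 * sqrt (real k) * S a p"
    using sq Sp Sp0 by (intro add_mono mult_right_mono mult_left_mono) auto
  finally have m: "sqrt (real p) * S a k \<le> 3 * sqrt (real k) * S a p" by simp
  have "(sqrt (real p) * S a k)^2 \<le> (3 * sqrt (real k) * S a p)^2"
    using m Sk0 by (intro power_mono) auto
  then show ?thesis by (simp add: power_mult_distrib)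
qed

theorem proposition2:
  fixes \<alpha> :: real
  assumes "\<alpha> \<ge> 0"
  shows "\<exists>c C. 0 < c \<and> c \<le> C \<and>
    (\<forall>k n (v :: nat \<Rightarrow> real).
       k \<ge> 1 \<longrightarrow>
       (\<Sum>j<n. (v j)^2) = 1 \<longrightarrow>
       card {j. j < n \<and> v j \<noteq> 0} = k \<longrightarrow>
       (\<forall>i\<in>{1..k}. (sorted_abs n v i)^2 = lam \<alpha> k * real i powr (-\<alpha>)) \<longrightarrow>
       c * rate \<alpha> k \<le> (MAX p\<in>{1..k}. real p * (s_fun n v p)^2) \<and>
       (MAX p\<in>{1..k}. real p * (s_fun n v p)^2) \<le> C * rate \<alpha> k)"
proof (rule exI[of _ 1], rule exI[of _ 9], intro conjI allI impI)
  fix k n and v :: "nat \<Rightarrow> real"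
  assume k: "k \<ge> 1"
    and "(\<Sum>j<n. (v j)^2) = 1" and "card {j. j < n \<and> v j \<noteq> 0} = k"
    and h: "\<forall>i\<in>{1..k}. (sorted_abs n v i)^2 = lam \<alpha> k * real i powr (-\<alpha>)"
  have Spos: "0 < S \<alpha> p" if "1 \<le> p" for p
  proof -
    have "0 < real p powr (1 - \<alpha>)" using that by simp
    also have "\<dots> \<le> S \<alpha> p" using S_lower assms that by auto
    finally show ?thesis .
  qed
  have sf: "s_fun n v p = S \<alpha> k / S \<alpha> p" if p: "p \<in> {1..k}" for p
  proof -
    have "(\<Sum>i=1..p. (sorted_abs n v i)^2) = (\<Sum>i=1..p. lam \<alpha> k * real i powr (-\<alpha>))"
      using h p by (intro sum.cong) auto
    also have "\<dots> = lam \<alpha> k * S \<alpha> p" by (simp add: S_def sum_distrib_left)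
    also have "lam \<alpha> k = inverse (S \<alpha> k)" by (simp add: lam_def S_def)
    finally have e: "(\<Sum>i=1..p. (sorted_abs n v i)^2) = S \<alpha> p / S \<alpha> k"
      by (simp add: divide_inverse mult.commute)
    show ?thesis unfolding s_fun_def e by simp
  qed
  define g where "g p = real p * (S \<alpha> k / S \<alpha> p)^2" for p
  have M: "(MAX p\<in>{1..k}. real p * (s_fun n v p)^2) = (MAX p\<in>{1..k}. g p)"
    using sf unfolding g_def by (intro arg_cong[where f=Max] image_cong) auto
  have ne: "{1..k} \<noteq> {}" using k by auto
  show "1 * rate \<alpha> k \<le> (MAX p\<in>{1..k}. real p * (s_fun n v p)^2)"
  proof (cases "\<alpha> < 1/2")
    case True
    have "rate \<alpha> k = (real k powr (1 - \<alpha>))^2"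
      using True k by (simp add: rate_def power2_eq_square powr_add[symmetric])
    also have "\<dots> \<le> (S \<alpha> k)^2" using S_lower[OF assms k] k by (intro power_mono) auto
    also have "\<dots> = g 1" by (simp add: g_def S_def)
    also have "\<dots> \<le> (MAX p\<in>{1..k}. g p)" using k by (intro Max_ge) auto
    finally have "rate \<alpha> k \<le> (MAX p\<in>{1..k}. g p)" .
    then show ?thesis using M by simp
  next
    case False
    have "rate \<alpha> k = g k" using False Spos[of k] k by (simp add: rate_def g_def)
    also have "\<dots> \<le> (MAX p\<in>{1..k}. g p)" using k by (intro Max_ge) auto
    finally have "rate \<alpha> k \<le> (MAX p\<in>{1..k}. g p)" .
    then show ?thesis using M by simp
  qed
  have "(MAX p\<in>{1..k}. g p) \<le> 9 * rate \<alpha> k"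
  proof (rule Max.boundedI)
    show "finite (g ` {1..k})" by simp
    show "g ` {1..k} \<noteq> {}" using ne by simp
    fix x assume "x \<in> g ` {1..k}"
    then obtain p where p: "p \<in> {1..k}" and x: "x = g p" by auto
    have Sp: "0 < (S \<alpha> p)^2" using Spos[of p] p by simp
    have "real p * (S \<alpha> k)^2 \<le> 9 * rate \<alpha> k * (S \<alpha> p)^2"
    proof (cases "\<alpha> < 1/2")
      case True
      have "real p * (S \<alpha> k)^2 \<le> 4 * real k powr (2 - 2*\<alpha>) * (S \<alpha> p)^2"
        using upper_small[OF assms True] p by auto
      also have "\<dots> \<le> 9 * real k powr (2 - 2*\<alpha>) * (S \<alpha> p)^2"
        using Sp by (intro mult_right_mono) auto
      finally show ?thesis using True by (simp add: rate_def)
    next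
      case False
      then show ?thesis using upper_large[of \<alpha> p k] p by (simp add: rate_def)
    qed
    then show "x \<le> 9 * rate \<alpha> k" unfolding x
      using Sp by (simp add: g_def power_divide field_simps)
  qed
  then show "(MAX p\<in>{1..k}. real p * (s_fun n v p)^2) \<le> 9 * rate \<alpha> k"
    using M by simp
qed simp_all

end
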